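(* Let $(X,d)$ be a metric space, $E\subseteq X$, $x\in E$. The values of $$\underline{\delta}_E(x)=\liminf_{\lambda\to0}\liminf_{r\to0}\frac{\log n(\lambda r,E\cap\overline{B}(x,r))}{\log 1/\lambda},\qquad \overline{\delta}_E(x)=\limsup_{\lambda\to0}\limsup_{r\to0}\frac{\log n(\lambda r,E\cap\overline{B}(x,r))}{\log 1/\lambda}$$ do not change if $n$ is replaced by $\nu$ or by $\overline{n}$, or if $E\cap\overline{B}(x,r)$ is replaced by $E\cap B(x,r)$. Moreover, if $E$ is closed in $X$, they do not change if $E\cap\overline{B}(x,r)$ is replaced by $\overline{E\cap B(x,r)}$.
   Context: $B(x,r)$ is the open ball, $\overline{B}(x,r)=\{y:d(x,y)\le r\}$ the closed ball, and $\overline{A}$ denotes closure. For $A\subseteq X$: $n(r,A)$ (resp. $\overline{n}(r,A)$) is the minimum number of open (resp. closed) balls of radius $r$ necessary to cover $A$, and $\nu(r,A)$ is the maximum number of pairwise disjoint open balls of $A$ (as a metric space) of radius $r$ contained in $A$. The numbers $\underline{\delta}_E(x)$, $\overline{\delta}_E(x)$ are the lower and upper tangential dimensions of $E$ at $x$. *)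

theory Defs
  imports "HOL-Analysis.Analysis" "HOL-Library.Extended_Nat"
begin

definition ncov :: "real \<Rightarrow> 'a::metric_space set \<Rightarrow> enat" where
  "ncov r A = Inf {enat (card C) | C. finite C \<and> A \<subseteq> (\<Union>c\<in>C. ball c r)}"

definition ncov_closed :: "real \<Rightarrow> 'a::metric_space set \<Rightarrow> enat" where
  "ncov_closed r A = Inf {enat (card C) | C. finite C \<and> A \<subseteq> (\<Union>c\<in>C. cball c r)}"

definition nu :: "real \<Rightarrow> 'a::metric_space set \<Rightarrow> enat" where
  "nu r A = Sup {enat (card C) | C. finite C \<and> C \<subseteq> A \<and>
     (\<forall>c\<in>C. \<forall>c'\<in>C. c \<noteq> c' \<longrightarrow>
        {z\<in>A. dist c z < r} \<inter> {z\<in>A. dist c' z < r} = {})}"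

definition logratio :: "enat \<Rightarrow> real \<Rightarrow> ereal" where
  "logratio m l = (case m of \<infinity> \<Rightarrow> \<infinity> | enat k \<Rightarrow> ereal (ln (real k) / ln (1 / l)))"

definition lower_tdim :: "(real \<Rightarrow> 'a set \<Rightarrow> enat) \<Rightarrow> (real \<Rightarrow> 'a set) \<Rightarrow> ereal" where
  "lower_tdim N S = Liminf (at_right 0) (\<lambda>l. Liminf (at_right 0) (\<lambda>r. logratio (N (l * r) (S r)) l))"

definition upper_tdim :: "(real \<Rightarrow> 'a set \<Rightarrow> enat) \<Rightarrow> (real \<Rightarrow> 'a set) \<Rightarrow> ereal" where
  "upper_tdim N S = Limsup (at_right 0) (\<lambda>l. Limsup (at_right 0) (\<lambda>r. logratio (N (l * r) (S r)) l))"

end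

theory Submission
  imports Defs "HOL-Real_Asymp.Real_Asymp"
begin

lemma setb_mono: "(\<And>C. P C \<Longrightarrow> Q C) \<Longrightarrow> {f C | C. P C} \<subseteq> {f C | C. Q C}"
  by blast

lemma ncov_mono_set: "A \<subseteq> B \<Longrightarrow> ncov r A \<le> ncov r B"
  unfolding ncov_def by (intro Inf_superset_mono setb_mono) auto

lemma ncov_mono_rad: "r \<le> r' \<Longrightarrow> ncov r' A \<le> ncov r A"
  unfolding ncov_def
proof (intro Inf_superset_mono setb_mono)
  fix C assume "r \<le> r'" "finite C \<and> A \<subseteq> (\<Union>c\<in>C. ball c r)"
  moreover have "\<And>c. ball c r \<subseteq> ball c r'" using \<open>r \<le> r'\<close> by auto
  ultimately show "finite C \<and> A \<subseteq> (\<Union>c\<in>C. ball c r')" by blast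
qed

lemma ncov_closed_le: "ncov_closed r A \<le> ncov r A"
  unfolding ncov_def ncov_closed_def
proof (intro Inf_superset_mono setb_mono)
  fix C assume "finite C \<and> A \<subseteq> (\<Union>c\<in>C. ball c r)"
  moreover have "\<And>c. ball c r \<subseteq> cball c r" by auto
  ultimately show "finite C \<and> A \<subseteq> (\<Union>c\<in>C. cball c r)" by blast
qed

lemma ncov_le_closed: assumes "s > 0" shows "ncov (2 * s) A \<le> ncov_closed s A"
  unfolding ncov_def ncov_closed_def
proof (intro Inf_superset_mono setb_mono)
  fix C assume "finite C \<and> A \<subseteq> (\<Union>c\<in>C. cball c s)"
  moreover have "\<And>c. cball c s \<subseteq> ball c (2 * s)" using assms by auto
  ultimately show "finite C \<and> A \<subseteq> (\<Union>c\<in>C. ball c (2 * s))" by blast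
qed
lemma nu_le_ncov: assumes "s > 0" shows "nu s A \<le> ncov (s/2) A"
  unfolding nu_def ncov_def
proof (intro Sup_least Inf_greatest)
  fix p q assume p: "p \<in> {enat (card C) |C. finite C \<and> C \<subseteq> A \<and>
     (\<forall>c\<in>C. \<forall>c'\<in>C. c \<noteq> c' \<longrightarrow>
        {z\<in>A. dist c z < s} \<inter> {z\<in>A. dist c' z < s} = {})}"
    and q: "q \<in> {enat (card C) |C. finite C \<and> A \<subseteq> (\<Union>c\<in>C. ball c (s/2))}"
  from p have "\<exists>C. p = enat (card C) \<and> finite C \<and> C \<subseteq> A \<and>
    (\<forall>c\<in>C. \<forall>c'\<in>C. c \<noteq> c' \<longrightarrow> {z\<in>A. dist c z < s} \<inter> {z\<in>A. dist c' z < s} = {})"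
    by (simp only: mem_Collect_eq)
  then obtain C where C: "p = enat (card C)" "finite C" "C \<subseteq> A"
    "\<forall>c\<in>C. \<forall>c'\<in>C. c \<noteq> c' \<longrightarrow> {z\<in>A. dist c z < s} \<inter> {z\<in>A. dist c' z < s} = {}"
    by (elim exE conjE)
  from q have "\<exists>D. q = enat (card D) \<and> finite D \<and> A \<subseteq> (\<Union>c\<in>D. ball c (s/2))"
    by (simp only: mem_Collect_eq)
  then obtain D where D: "q = enat (card D)" "finite D" "A \<subseteq> (\<Union>c\<in>D. ball c (s/2))"
    by (elim exE conjE)
  have "\<forall>c\<in>C. \<exists>d. d \<in> D \<and> c \<in> ball d (s/2)" using C(3) D(3) by blast
  then have "\<exists>f. \<forall>c\<in>C. f c \<in> D \<and> c \<in> ball (f c) (s/2)" by (rule bchoice)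
  then obtain f where f: "\<forall>c\<in>C. f c \<in> D \<and> c \<in> ball (f c) (s/2)" by blast
  have "inj_on f C"
  proof (rule inj_onI, rule ccontr)
    fix c c' assume cc: "c \<in> C" "c' \<in> C" "f c = f c'" "c \<noteq> c'"
    have "dist c c' < s"
    proof -
      have "dist (f c) c < s/2" "dist (f c) c' < s/2" using f cc by auto
      moreover have "dist c c' \<le> dist c (f c) + dist c' (f c)" by (rule dist_triangle2)
      ultimately show ?thesis by (simp add: dist_commute)
    qed
    moreover have "c' \<in> A" using cc C(3) by blast
    ultimately have "c' \<in> {z\<in>A. dist c z < s} \<inter> {z\<in>A. dist c' z < s}" using assms by simp
    then show False using C(4) cc by blast
  qed
  moreover have "f ` C \<subseteq> D" using f by auto
  ultimately have "card C \<le> card D" using D(2) by (rule card_inj_on_le)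
  then show "p \<le> q" using C D by simp
qed

lemma ncov_le_nu: assumes "s > 0" shows "ncov (2 * s) A \<le> nu s A"
proof (cases "nu s A = \<infinity>")
  case False
  define S where "S = {enat (card C) |C. finite C \<and> C \<subseteq> A \<and>
     (\<forall>c\<in>C. \<forall>c'\<in>C. c \<noteq> c' \<longrightarrow>
        {z\<in>A. dist c z < s} \<inter> {z\<in>A. dist c' z < s} = {})}"
  have nuS: "nu s A = Sup S" unfolding nu_def S_def ..
  have "enat (card {}) \<in> S" unfolding S_def by (intro CollectI exI[of _ "{}"]) simp
  then have ne: "S \<noteq> {}" by blast
  have fin: "finite S" using False ne nuS by (auto simp: Sup_enat_def split: if_splits)
  have "Sup S \<in> S" using fin ne by (simp add: Sup_enat_def)
  then have "\<exists>C. Sup S = enat (card C) \<and> finite C \<and> C \<subseteq> A \<and>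
    (\<forall>c\<in>C. \<forall>c'\<in>C. c \<noteq> c' \<longrightarrow> {z\<in>A. dist c z < s} \<inter> {z\<in>A. dist c' z < s} = {})"
    unfolding S_def by (simp only: mem_Collect_eq)
  then obtain C where C: "Sup S = enat (card C)" "finite C" "C \<subseteq> A"
    "\<forall>c\<in>C. \<forall>c'\<in>C. c \<noteq> c' \<longrightarrow> {z\<in>A. dist c z < s} \<inter> {z\<in>A. dist c' z < s} = {}"
    by (elim exE conjE)
  have cover: "A \<subseteq> (\<Union>c\<in>C. ball c (2 * s))"
  proof (rule ccontr)
    assume "\<not> ?thesis"
    then obtain z where z0: "z \<in> A" "z \<notin> (\<Union>c\<in>C. ball c (2 * s))" by blast
    then have "\<forall>c\<in>C. \<not> dist c z < 2 * s" by auto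
    then have z: "z \<in> A" "\<forall>c\<in>C. dist c z \<ge> 2 * s" using z0 by (auto simp: not_less)
    have zC: "z \<notin> C"
    proof
      assume "z \<in> C"
      then have "dist z z \<ge> 2 * s" using z(2) by blast
      then show False using assms by simp
    qed
    have disj: "{w\<in>A. dist c w < s} \<inter> {w\<in>A. dist z w < s} = {}" if "c \<in> C" for c
    proof -
      { fix w assume "dist c w < s" "dist z w < s"
        moreover have "dist c z \<le> dist c w + dist z w" by (rule dist_triangle2)
        ultimately have "dist c z < 2 * s" by simp
        moreover have "dist c z \<ge> 2 * s" using z(2) that by blast
        ultimately have False by simp }
      then show ?thesis by blast
    qed
    have "enat (card (insert z C)) \<in> S"
    proof -
      have "\<forall>c\<in>insert z C. \<forall>c'\<in>insert z C. c \<noteq> c' \<longrightarrow> {w\<in>A. dist c w < s} \<inter> {w\<in>A. dist c' w < s} = {}"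
      proof (intro ballI impI)
        fix c c' assume h: "c \<in> insert z C" "c' \<in> insert z C" "c \<noteq> c'"
        show "{w\<in>A. dist c w < s} \<inter> {w\<in>A. dist c' w < s} = {}"
        proof (cases "c = z")
          case True
          then have "c' \<in> C" using h by simp
          then show ?thesis using disj[of c'] True by (metis Int_commute)
        next
          case False
          show ?thesis
          proof (cases "c' = z")
            case True
            have "c \<in> C" using h False by simp
            then show ?thesis using disj[of c] True by simp
          next
            case F2: False
            then have "c \<in> C" "c' \<in> C" using h False by auto
            then show ?thesis using h(3) C(4) by simp
          qed
        qed
      qed
      moreover have "finite (insert z C)" "insert z C \<subseteq> A" using C(2,3) z(1) by auto
      ultimately show ?thesis unfolding S_def by (intro CollectI exI[of _ "insert z C"]) simp
    qed
    then have "enat (card (insert z C)) \<le> Sup S" by (rule Sup_upper)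
    then show False using C zC by simp
  qed
  have "ncov (2 * s) A \<le> enat (card C)" unfolding ncov_def using C(2) cover
    by (intro Inf_lower CollectI exI[of _ C]) simp
  then show ?thesis using C nuS by simp
qed simp

lemma ln_nat_nonneg: "0 \<le> ln (real (k::nat))"
  by (cases "k = 0") auto

lemma logratio_nonneg: "0 < l \<Longrightarrow> l < 1 \<Longrightarrow> 0 \<le> logratio m l"
  by (cases m) (auto simp: logratio_def ln_nat_nonneg intro!: divide_nonneg_pos)

lemma ln_nat_mono: "(k::nat) \<le> k' \<Longrightarrow> ln (real k) \<le> ln (real k')"
  by (cases "k = 0") (auto simp: ln_nat_nonneg)

lemma logratio_mono: "0 < l \<Longrightarrow> l < 1 \<Longrightarrow> m \<le> m' \<Longrightarrow> logratio m l \<le> logratio m' l"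
  by (cases m; cases m') (auto simp: logratio_def intro!: divide_right_mono ln_nat_mono)

lemma logratio_scale:
  assumes "0 < l" "l < 1" "0 < l'" "l' < 1"
  shows "logratio m l = logratio m l' * ereal (ln (1/l') / ln (1/l))"
proof -
  have p: "ln (1/l') / ln (1/l) > 0" "ln (1/l') > 0" "ln (1/l) > 0" using assms by (auto intro!: divide_pos_pos)
  show ?thesis using p by (cases m) (auto simp: logratio_def)
qed

lemma scale_Liminf: "b > 0 \<Longrightarrow> Liminf (at_right 0) (\<lambda>r. g (b*r)) = Liminf (at_right (0::real)) g"
  using Liminf_filtermap_eq[of "times b" "at_right 0" g] filtermap_times_pos_at_right[of b 0]
  by (auto simp: inj_on_def)

lemma scale_Limsup: "b > 0 \<Longrightarrow> Limsup (at_right 0) (\<lambda>r. g (b*r)) = Limsup (at_right (0::real)) g"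
  using Limsup_filtermap_eq[of "times b" "at_right 0" g] filtermap_times_pos_at_right[of b 0]
  by (auto simp: inj_on_def)

lemma eps_lemma:
  fixes L1 L2 :: ereal
  assumes "0 \<le> L2" "\<And>e. e > 0 \<Longrightarrow> L1 \<le> L2 * ereal (1+e)"
  shows "L1 \<le> L2"
proof (cases L2)
  case (real y)
  show ?thesis
  proof (rule ereal_le_epsilon2)
    fix e :: real assume e: "0 < e"
    have y: "y \<ge> 0" using assms real by auto
    have "L1 \<le> L2 * ereal (1 + e/(y+1))" using assms(2) e y by auto
    also have "\<dots> = ereal (y + y * (e/(y+1)))" using real by (simp add: algebra_simps)
    also have "\<dots> \<le> ereal (y + e)"
    proof -
      have "y * (e/(y+1)) \<le> e" using y e by (simp add: field_simps)
      then show ?thesis by simp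
    qed
    finally show "L1 \<le> L2 + ereal e" using real by simp
  qed
qed (use assms in auto)

lemma compare:
  fixes N1 N2 :: "real \<Rightarrow> 'a set \<Rightarrow> enat"
  assumes a: "a > 0" and b: "b > 0" and d: "\<delta> > 0"
    and H: "\<And>l r. 0<l \<Longrightarrow> l<\<delta> \<Longrightarrow> 0<r \<Longrightarrow> r<\<delta> \<Longrightarrow> N1 (l*r) (S1 r) \<le> N2 (a*l*(b*r)) (S2 (b*r))"
  shows "lower_tdim N1 S1 \<le> lower_tdim N2 S2 \<and> upper_tdim N1 S1 \<le> upper_tdim N2 S2"
proof -
  define F1 where "F1 l r = logratio (N1 (l*r) (S1 r)) l" for l r
  define F2 where "F2 l r = logratio (N2 (l*r) (S2 r)) l" for l r
  define I1 where "I1 l = Liminf (at_right 0) (F1 l)" for l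
  define I2 where "I2 l = Liminf (at_right 0) (F2 l)" for l
  define J1 where "J1 l = Limsup (at_right 0) (F1 l)" for l
  define J2 where "J2 l = Limsup (at_right 0) (F2 l)" for l
  define c where "c l = ln (1/(a*l)) / ln (1/l)" for l
  have lo: "lower_tdim N1 S1 = Liminf (at_right 0) I1" "lower_tdim N2 S2 = Liminf (at_right 0) I2"
    by (simp_all add: lower_tdim_def I1_def[abs_def] I2_def[abs_def] F1_def[abs_def] F2_def[abs_def])
  have up: "upper_tdim N1 S1 = Limsup (at_right 0) J1" "upper_tdim N2 S2 = Limsup (at_right 0) J2"
    by (simp_all add: upper_tdim_def J1_def[abs_def] J2_def[abs_def] F1_def[abs_def] F2_def[abs_def])
  have evsmall: "\<forall>\<^sub>F l in at_right (0::real). 0 < l \<and> l < \<epsilon>" if "\<epsilon> > 0" for \<epsilon>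
    using that by (simp add: eventually_at_right_field) (metis)
  have nonneg: "0 \<le> I2 l" "0 \<le> J2 l" if "0 < l" "l < 1" for l
  proof -
    have ev: "\<forall>\<^sub>F r in at_right (0::real). 0 \<le> F2 l r"
      using that by (auto simp: F2_def logratio_nonneg)
    show "0 \<le> I2 l" unfolding I2_def by (rule Liminf_bounded[OF ev])
    have "Liminf (at_right 0) (F2 l) \<le> Limsup (at_right 0) (F2 l)"
      by (rule Liminf_le_Limsup) simp
    then show "0 \<le> J2 l" using \<open>0 \<le> I2 l\<close> unfolding I2_def J2_def by simp
  qed
  have inner: "I1 l \<le> I2 (a*l) * ereal (c l) \<and> J1 l \<le> J2 (a*l) * ereal (c l)"
    if l: "0 < l" "l < \<delta>" "l < 1" "a*l < 1" for l
  proof -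
    have cpos: "c l \<ge> 0" using l a unfolding c_def by (auto intro!: divide_nonneg_pos)
    have ev: "\<forall>\<^sub>F r in at_right 0. F1 l r \<le> F2 (a*l) (b*r) * ereal (c l)"
    proof -
      have "\<forall>\<^sub>F r in at_right (0::real). 0 < r \<and> r < \<delta>" using evsmall d by blast
      then show ?thesis
      proof (rule eventually_mono)
        fix r assume r: "0 < r \<and> r < \<delta>"
        have "F1 l r \<le> logratio (N2 (a*l*(b*r)) (S2 (b*r))) l"
          unfolding F1_def using l r by (intro logratio_mono H) auto
        also have "\<dots> = F2 (a*l) (b*r) * ereal (c l)"
          unfolding F2_def c_def using l a by (intro logratio_scale) auto
        finally show "F1 l r \<le> F2 (a*l) (b*r) * ereal (c l)" .
      qed
    qed
    have "I1 l \<le> Liminf (at_right 0) (\<lambda>r. F2 (a*l) (b*r) * ereal (c l))"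
      unfolding I1_def by (rule Liminf_mono[OF ev])
    also have "\<dots> = Liminf (at_right 0) (\<lambda>r. F2 (a*l) (b*r)) * ereal (c l)"
      by (rule Liminf_ereal_mult_right) (use cpos in auto)
    also have "\<dots> = I2 (a*l) * ereal (c l)"
      unfolding I2_def using scale_Liminf[OF b, of "F2 (a*l)"] by simp
    finally have 1: "I1 l \<le> I2 (a*l) * ereal (c l)" .
    have "J1 l \<le> Limsup (at_right 0) (\<lambda>r. F2 (a*l) (b*r) * ereal (c l))"
      unfolding J1_def by (rule Limsup_mono[OF ev])
    also have "\<dots> = Limsup (at_right 0) (\<lambda>r. F2 (a*l) (b*r)) * ereal (c l)"
      by (rule Limsup_ereal_mult_right) (use cpos in auto)
    also have "\<dots> = J2 (a*l) * ereal (c l)"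
      unfolding J2_def using scale_Limsup[OF b, of "F2 (a*l)"] by simp
    finally show ?thesis using 1 by simp
  qed
  have climit: "(c \<longlongrightarrow> 1) (at_right 0)"
    unfolding c_def using a by real_asymp
  have outer: "\<forall>\<^sub>F l in at_right 0. I1 l \<le> I2 (a*l) * ereal (1+e) \<and> J1 l \<le> J2 (a*l) * ereal (1+e)"
    if e: "e > 0" for e
  proof -
    have "\<forall>\<^sub>F l in at_right 0. c l < 1 + e"
      using order_tendstoD(2)[OF climit] e by simp
    moreover have "\<forall>\<^sub>F l in at_right (0::real). 0 < l \<and> l < min (min \<delta> 1) (1/a)"
      using evsmall[of "min (min \<delta> 1) (1/a)"] d a by simp
    ultimately show ?thesis
    proof eventually_elim
      case (elim l)
      then have l: "0 < l" "l < \<delta>" "l < 1" "a*l < 1" using a by (auto simp: field_simps)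
      have al: "0 < a*l" "a*l < 1" using l a by auto
      note i = inner[OF l]
      have "I2 (a*l) * ereal (c l) \<le> I2 (a*l) * ereal (1+e)"
        using nonneg(1)[OF al] elim by (intro ereal_mult_left_mono) auto
      moreover have "J2 (a*l) * ereal (c l) \<le> J2 (a*l) * ereal (1+e)"
        using nonneg(2)[OF al] elim by (intro ereal_mult_left_mono) auto
      ultimately show ?case using i by (meson order_trans)
    qed
  qed
  have nn2: "\<forall>\<^sub>F l in at_right (0::real). 0 \<le> I2 l"
    using evsmall[of 1] by (rule eventually_mono) (use nonneg in auto)
  have nnL: "0 \<le> Liminf (at_right 0) I2" by (rule Liminf_bounded[OF nn2])
  have nnU: "0 \<le> Limsup (at_right 0) J2"
  proof -
    have "\<forall>\<^sub>F l in at_right (0::real). 0 \<le> J2 l"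
      using evsmall[of 1] by (rule eventually_mono) (use nonneg in auto)
    then have "0 \<le> Liminf (at_right 0) J2" by (rule Liminf_bounded)
    also have "\<dots> \<le> Limsup (at_right 0) J2" by (rule Liminf_le_Limsup) simp
    finally show ?thesis .
  qed
  have L: "Liminf (at_right 0) I1 \<le> Liminf (at_right 0) I2"
  proof (rule eps_lemma[OF nnL])
    fix e :: real assume e: "e > 0"
    have "Liminf (at_right 0) I1 \<le> Liminf (at_right 0) (\<lambda>l. I2 (a*l) * ereal (1+e))"
      by (rule Liminf_mono) (use outer[OF e] in \<open>auto elim: eventually_mono\<close>)
    also have "\<dots> = Liminf (at_right 0) (\<lambda>l. I2 (a*l)) * ereal (1+e)"
      by (rule Liminf_ereal_mult_right) (use e in auto)
    also have "\<dots> = Liminf (at_right 0) I2 * ereal (1+e)"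
      using scale_Liminf[OF a, of I2] by simp
    finally show "Liminf (at_right 0) I1 \<le> Liminf (at_right 0) I2 * ereal (1+e)" .
  qed
  have U: "Limsup (at_right 0) J1 \<le> Limsup (at_right 0) J2"
  proof (rule eps_lemma[OF nnU])
    fix e :: real assume e: "e > 0"
    have "Limsup (at_right 0) J1 \<le> Limsup (at_right 0) (\<lambda>l. J2 (a*l) * ereal (1+e))"
      by (rule Limsup_mono) (use outer[OF e] in \<open>auto elim: eventually_mono\<close>)
    also have "\<dots> = Limsup (at_right 0) (\<lambda>l. J2 (a*l)) * ereal (1+e)"
      by (rule Limsup_ereal_mult_right) (use e in auto)
    also have "\<dots> = Limsup (at_right 0) J2 * ereal (1+e)"
      using scale_Limsup[OF a, of J2] by simp
    finally show "Limsup (at_right 0) J1 \<le> Limsup (at_right 0) J2 * ereal (1+e)" .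
  qed
  show ?thesis using L U lo up by simp
qed


theorem proposition3p2:
  fixes E :: "'a::metric_space set" and x :: 'a
  assumes "x \<in> E"
  shows "lower_tdim nu (\<lambda>r. E \<inter> cball x r) = lower_tdim ncov (\<lambda>r. E \<inter> cball x r)
       \<and> upper_tdim nu (\<lambda>r. E \<inter> cball x r) = upper_tdim ncov (\<lambda>r. E \<inter> cball x r)
       \<and> lower_tdim ncov_closed (\<lambda>r. E \<inter> cball x r) = lower_tdim ncov (\<lambda>r. E \<inter> cball x r)
       \<and> upper_tdim ncov_closed (\<lambda>r. E \<inter> cball x r) = upper_tdim ncov (\<lambda>r. E \<inter> cball x r)
       \<and> lower_tdim ncov (\<lambda>r. E \<inter> ball x r) = lower_tdim ncov (\<lambda>r. E \<inter> cball x r)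
       \<and> upper_tdim ncov (\<lambda>r. E \<inter> ball x r) = upper_tdim ncov (\<lambda>r. E \<inter> cball x r)
       \<and> (closed E \<longrightarrow>
            lower_tdim ncov (\<lambda>r. closure (E \<inter> ball x r)) = lower_tdim ncov (\<lambda>r. E \<inter> cball x r)
          \<and> upper_tdim ncov (\<lambda>r. closure (E \<inter> ball x r)) = upper_tdim ncov (\<lambda>r. E \<inter> cball x r))"
proof -
  define Sc where "Sc = (\<lambda>r. E \<inter> cball x r)"
  define Sb where "Sb = (\<lambda>r. E \<inter> ball x r)"
  define Scl where "Scl = (\<lambda>r. closure (E \<inter> ball x r))"
  have b1: "nu (l*r) (Sc r) \<le> ncov (1/2*l*(1*r)) (Sc (1*r))" if "0<l" "0<r" for l r :: real
  proof -
    have "1/2*l*(1*r) = (l*r)/2" by simp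
    then show ?thesis using nu_le_ncov[of "l*r" "Sc r"] that by simp
  qed
  have b2: "ncov (l*r) (Sc r) \<le> nu (1/2*l*(1*r)) (Sc (1*r))" if "0<l" "0<r" for l r :: real
  proof -
    have "1/2*l*(1*r) = (l*r)/2" "l*r = 2 * ((l*r)/2)" by simp_all
    then show ?thesis using ncov_le_nu[of "(l*r)/2" "Sc r"] that by simp
  qed
  have b3: "ncov_closed (l*r) (Sc r) \<le> ncov (1*l*(1*r)) (Sc (1*r))" for l r :: real
    using ncov_closed_le by simp
  have b4: "ncov (l*r) (Sc r) \<le> ncov_closed (1/2*l*(1*r)) (Sc (1*r))" if "0<l" "0<r" for l r :: real
  proof -
    have "1/2*l*(1*r) = (l*r)/2" "l*r = 2 * ((l*r)/2)" by simp_all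
    then show ?thesis using ncov_le_closed[of "(l*r)/2" "Sc r"] that by simp
  qed
  have b5: "ncov (l*r) (Sb r) \<le> ncov (1*l*(1*r)) (Sc (1*r))" for l r :: real
    unfolding Sb_def Sc_def by simp (rule ncov_mono_set, auto)
  have b6: "ncov (l*r) (Sc r) \<le> ncov (1/2*l*(2*r)) (Sb (2*r))" if "0<r" for l r :: real
  proof -
    have "1/2*l*(2*r) = l*r" by simp
    moreover have "Sc r \<subseteq> Sb (2*r)" unfolding Sc_def Sb_def using that by auto
    ultimately show ?thesis using ncov_mono_set by metis
  qed
  have c1: "lower_tdim nu Sc \<le> lower_tdim ncov Sc \<and> upper_tdim nu Sc \<le> upper_tdim ncov Sc"
    by (rule compare[of "1/2" 1 1]) (use b1 in auto)
  have c2: "lower_tdim ncov Sc \<le> lower_tdim nu Sc \<and> upper_tdim ncov Sc \<le> upper_tdim nu Sc"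
    by (rule compare[of "1/2" 1 1]) (use b2 in auto)
  have c3: "lower_tdim ncov_closed Sc \<le> lower_tdim ncov Sc \<and> upper_tdim ncov_closed Sc \<le> upper_tdim ncov Sc"
    by (rule compare[of 1 1 1]) (use b3 in auto)
  have c4: "lower_tdim ncov Sc \<le> lower_tdim ncov_closed Sc \<and> upper_tdim ncov Sc \<le> upper_tdim ncov_closed Sc"
    by (rule compare[of "1/2" 1 1]) (use b4 in auto)
  have c5: "lower_tdim ncov Sb \<le> lower_tdim ncov Sc \<and> upper_tdim ncov Sb \<le> upper_tdim ncov Sc"
    by (rule compare[of 1 1 1]) (use b5 in auto)
  have c6: "lower_tdim ncov Sc \<le> lower_tdim ncov Sb \<and> upper_tdim ncov Sc \<le> upper_tdim ncov Sb"
    by (rule compare[of "1/2" 2 1]) (use b6 in auto)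
  have c7: "lower_tdim ncov Scl \<le> lower_tdim ncov Sc \<and> upper_tdim ncov Scl \<le> upper_tdim ncov Sc
     \<and> lower_tdim ncov Sb \<le> lower_tdim ncov Scl \<and> upper_tdim ncov Sb \<le> upper_tdim ncov Scl"
    if cl: "closed E"
  proof -
    have s1: "Scl r \<subseteq> Sc r" for r
      unfolding Scl_def Sc_def using cl by (intro closure_minimal) auto
    have s2: "Sb r \<subseteq> Scl r" for r
      unfolding Scl_def Sb_def by (rule closure_subset)
    have "lower_tdim ncov Scl \<le> lower_tdim ncov Sc \<and> upper_tdim ncov Scl \<le> upper_tdim ncov Sc"
      by (rule compare[of 1 1 1]) (use s1 in \<open>auto intro: ncov_mono_set\<close>)
    moreover have "lower_tdim ncov Sb \<le> lower_tdim ncov Scl \<and> upper_tdim ncov Sb \<le> upper_tdim ncov Scl"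
      by (rule compare[of 1 1 1]) (use s2 in \<open>auto intro: ncov_mono_set\<close>)
    ultimately show ?thesis by blast
  qed
  have main: "lower_tdim nu Sc = lower_tdim ncov Sc \<and> upper_tdim nu Sc = upper_tdim ncov Sc
    \<and> lower_tdim ncov_closed Sc = lower_tdim ncov Sc \<and> upper_tdim ncov_closed Sc = upper_tdim ncov Sc
    \<and> lower_tdim ncov Sb = lower_tdim ncov Sc \<and> upper_tdim ncov Sb = upper_tdim ncov Sc
    \<and> (closed E \<longrightarrow> lower_tdim ncov Scl = lower_tdim ncov Sc \<and> upper_tdim ncov Scl = upper_tdim ncov Sc)"
  proof (intro conjI impI)
    show "lower_tdim nu Sc = lower_tdim ncov Sc" using c1 c2 by (auto intro: antisym)
    show "upper_tdim nu Sc = upper_tdim ncov Sc" using c1 c2 by (auto intro: antisym)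
    show "lower_tdim ncov_closed Sc = lower_tdim ncov Sc" using c3 c4 by (auto intro: antisym)
    show "upper_tdim ncov_closed Sc = upper_tdim ncov Sc" using c3 c4 by (auto intro: antisym)
    show "lower_tdim ncov Sb = lower_tdim ncov Sc" using c5 c6 by (auto intro: antisym)
    show "upper_tdim ncov Sb = upper_tdim ncov Sc" using c5 c6 by (auto intro: antisym)
  next
    assume cl: "closed E"
    show "lower_tdim ncov Scl = lower_tdim ncov Sc" using c7[OF cl] c5 c6 by (meson antisym order_trans)
    show "upper_tdim ncov Scl = upper_tdim ncov Sc" using c7[OF cl] c5 c6 by (meson antisym order_trans)
  qed
  then show ?thesis unfolding Sc_def Sb_def Scl_def .
qed

end
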